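(* Let $\delta\in(0,1)$, let $\mathbf{k}$ be a reproducing kernel, and let $\mathcal{X}_{\mathrm{in}}=(x_i)_{i=1}^{n_{\mathrm{in}}}$ with $n_{\mathrm{out}}\in n_{\mathrm{in}}/2^{\mathbb{N}}$ (i.e. $n_{\mathrm{in}}/n_{\mathrm{out}}=2^m$ for a positive integer $m$). Let $\mathcal{X}_{\mathrm{out}}$ be the output of repeated Kernel Halving $\mathrm{RKH}(\delta)$, which sets $m=\log_2(n_{\mathrm{in}}/n_{\mathrm{out}})$ and applies $\mathrm{KH}(\delta/m)$ with kernel $\mathbf{k}$ $m$ times in succession (each time to the previous output). Then there is an event $\mathcal{E}$ of probability at least $1-\delta/2$ on which $(\mathbb{P}_{\mathrm{in}}-\mathbb{P}_{\mathrm{out}})\mathbf{k}$ is $(\mathbf{k},\nu)$-sub-Gaussian with $$\nu=\frac{2}{n_{\mathrm{out}}\sqrt3}\sqrt{\log\Big(\frac{6n_{\mathrm{out}}\log_2(n_{\mathrm{in}}/n_{\mathrm{out}})}{\delta}\Big)}\ \min\Big(\max_{x\in\mathcal{X}_{\mathrm{in}}}\sqrt{\mathbf{k}(x,x)},\ \max_{x\in\mathcal{X}_{\mathrm{in}}}\mathrm{MMD}_{\mathbf{k}}(\delta_x,\mathbb{P}_{\mathrm{in}})\Big).$$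
   Context: Kernel Halving $\mathrm{KH}(\delta)$: input $(x_1,\dots,x_{m'})$ with $m'$ even and kernel $\mathbf{k}$ with RKHS $\mathcal{H}_{\mathbf{k}}$. Set ordered lists $S_1=S_2=\emptyset$, $\psi_0=0$, $b_{\max,0}=0$. For $i=1,\dots,m'/2$: let $(x,x')=(x_{2i-1},x_{2i})$, $f_i=\mathbf{k}(x_{2i-1},\cdot)-\mathbf{k}(x_{2i},\cdot)$, $b_i=\|f_i\|_{\mathbf{k}}$, $b_{\max,i}=\max(b_i,b_{\max,i-1})$, $a_i=b_ib_{\max,i}(\tfrac12+\log(2m'/\delta))$, $\alpha_i=\langle\psi_{i-1},f_i\rangle_{\mathbf{k}}$. With probability $\min(1,\tfrac12(1-\alpha_i/a_i)_+)$ (fresh randomness) set $\eta_i=1$ and swap $x$ and $x'$; otherwise $\eta_i=-1$. Append $x$ to $S_1$, $x'$ to $S_2$, set $\psi_i=\psi_{i-1}+\eta_if_i$. Output $S_1$ (size $m'/2$). $\mathbb{P}_{\mathrm{in}},\mathbb{P}_{\mathrm{out}}$ are the empirical distributions of $\mathcal{X}_{\mathrm{in}},\mathcal{X}_{\mathrm{out}}$; $(\mathbb{P}_{\mathrm{in}}-\mathbb{P}_{\mathrm{out}})\mathbf{k}:=\frac1{n_{\mathrm{in}}}\sum_{x\in\mathcal{X}_{\mathrm{in}}}\mathbf{k}(x,\cdot)-\frac1{n_{\mathrm{out}}}\sum_{x\in\mathcal{X}_{\mathrm{out}}}\mathbf{k}(x,\cdot)$. $\mathrm{MMD}_{\mathbf{k}}(\mu,\tilde\mu)=\sup_{\|f\|_{\mathbf{k}}\le1}|\mathbb{E}_\mu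 f-\mathbb{E}_{\tilde\mu}f|$. A random $\phi\in\mathcal{H}_{\mathbf{k}}$ is $(\mathbf{k},\nu)$-sub-Gaussian on $\mathcal{E}$ if $\mathbb{E}[\exp(\langle f,\phi\rangle_{\mathbf{k}})\mathbf{1}_{\mathcal{E}}]\le\exp(\frac{\nu^2}{2}\|f\|_{\mathbf{k}}^2)$ for all $f\in\mathcal{H}_{\mathbf{k}}$. *)

theory Defs
  imports "HOL-Probability.Probability"
begin

text \<open>The reproducing kernel is represented through a feature map
  \<Phi> into a real inner product space: k(x,y) = <\<Phi> x, \<Phi> y>.
  The RKHS function associated with a vector f is x \<mapsto> <f, \<Phi> x>.\<close>

definition fkernel :: "('a \<Rightarrow> 'h::real_inner) \<Rightarrow> 'a \<Rightarrow> 'a \<Rightarrow> real" where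
  "fkernel \<Phi> x y = inner (\<Phi> x) (\<Phi> y)"

definition emb :: "('a \<Rightarrow> 'h::real_inner) \<Rightarrow> 'a list \<Rightarrow> 'h" where
  "emb \<Phi> xs = (1 / real (length xs)) *\<^sub>R sum_list (map \<Phi> xs)"

definition emp_avg :: "'a list \<Rightarrow> ('a \<Rightarrow> real) \<Rightarrow> real" where
  "emp_avg xs g = sum_list (map g xs) / real (length xs)"

definition mmd :: "('a \<Rightarrow> 'h::real_inner) \<Rightarrow> 'a list \<Rightarrow> 'a list \<Rightarrow> real" where
  "mmd \<Phi> xs ys = (SUP f\<in>{f::'h. norm f \<le> 1}.
      \<bar>emp_avg xs (\<lambda>x. inner f (\<Phi> x)) - emp_avg ys (\<lambda>x. inner f (\<Phi> x))\<bar>)"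

text \<open>Arguments: feature map, the constant
  c = 1/2 + log(2m'/delta), remaining input points (consumed in pairs),
  current psi, current b_max. Returns the distribution of (S1, list of eta's),
  where eta = True means eta_i = 1 (swap).\<close>
fun kh_loop :: "('a \<Rightarrow> 'h::real_inner) \<Rightarrow> real \<Rightarrow> 'a list \<Rightarrow> 'h \<Rightarrow> real
    \<Rightarrow> ('a list \<times> bool list) pmf" where
  "kh_loop \<Phi> c (x # x' # rest) \<psi> bmax =
     (let f = \<Phi> x - \<Phi> x';
          b = norm f;
          bm = max b bmax;
          a = b * bm * c;
          \<alpha> = inner \<psi> f;
          p = min 1 ((1/2) * max 0 (1 - \<alpha> / a))
      in bind_pmf (bernoulli_pmf p) (\<lambda>\<eta>.
           let s1 = (if \<eta> then x' else x);
               \<psi>' = \<psi> + (if \<eta> then 1 else -1) *\<^sub>R f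
           in map_pmf (\<lambda>(S, es). (s1 # S, \<eta> # es)) (kh_loop \<Phi> c rest \<psi>' bm)))"
| "kh_loop \<Phi> c _ \<psi> bmax = return_pmf ([], [])"

definition kh :: "('a \<Rightarrow> 'h::real_inner) \<Rightarrow> real \<Rightarrow> 'a list \<Rightarrow> ('a list \<times> bool list) pmf" where
  "kh \<Phi> \<delta> xs = kh_loop \<Phi> (1/2 + ln (2 * real (length xs) / \<delta>)) xs 0 0"

fun rkh_iter :: "('a \<Rightarrow> 'h::real_inner) \<Rightarrow> real \<Rightarrow> nat \<Rightarrow> 'a list
    \<Rightarrow> ('a list \<times> bool list list) pmf" where
  "rkh_iter \<Phi> \<delta>' 0 xs = return_pmf (xs, [])"
| "rkh_iter \<Phi> \<delta>' (Suc j) xs =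
     bind_pmf (kh \<Phi> \<delta>' xs) (\<lambda>(S, es).
       map_pmf (\<lambda>(T, ess). (T, es # ess)) (rkh_iter \<Phi> \<delta>' j S))"

definition rkh :: "('a \<Rightarrow> 'h::real_inner) \<Rightarrow> real \<Rightarrow> nat \<Rightarrow> 'a list
    \<Rightarrow> ('a list \<times> bool list list) pmf" where
  "rkh \<Phi> \<delta> m xs = rkh_iter \<Phi> (\<delta> / real m) m xs"

definition sub_gaussian_on :: "'w pmf \<Rightarrow> ('w \<Rightarrow> 'h::real_inner) \<Rightarrow> real \<Rightarrow> 'w set \<Rightarrow> bool" where
  "sub_gaussian_on P \<phi> \<nu> E \<longleftrightarrow>
     (\<forall>f::'h. measure_pmf.expectation P (\<lambda>\<omega>. exp (inner f (\<phi> \<omega>)) * indicator E \<omega>)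
              \<le> exp (\<nu>\<^sup>2 / 2 * (norm f)\<^sup>2))"

end

theory Submission imports Defs begin

lemma hoeff_pos:
  fixes u \<mu> :: real assumes "\<bar>\<mu>\<bar> \<le> 1" "0 \<le> u"
  shows "(1+\<mu>)/2 * exp u + (1-\<mu>)/2 * exp (-u) \<le> exp (\<mu>*u + u\<^sup>2/2)"
proof -
  define q where "q = (1+\<mu>)/2"
  have q: "0 \<le> q" "q \<le> 1" using assms by (auto simp: q_def)
  have pos: "0 < 1 + q * (exp (2*u) - 1)"
  proof -
    have "0 \<le> exp (2*u) - 1" using assms by simp
    hence "0 \<le> q * (exp (2*u) - 1)" using q by simp
    thus ?thesis by linarith
  qed
  have "- (2*u) * q + ln (1 + q * (exp (2*u) - 1)) \<le> (2*u)\<^sup>2 / 8"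
    using Hoeffdings_lemma_aux[of "2*u" q] q assms by simp
  hence "ln (1 + q * (exp (2*u) - 1)) \<le> 2*u*q + u\<^sup>2/2"
    by (simp add: power2_eq_square)
  hence "1 + q * (exp (2*u) - 1) \<le> exp (2*u*q + u\<^sup>2/2)"
    using pos by (metis exp_le_cancel_iff exp_ln)
  hence "exp (-u) * (1 + q * (exp (2*u) - 1)) \<le> exp (-u) * exp (2*u*q + u\<^sup>2/2)"
    by simp
  moreover have "exp (-u) * (1 + q * (exp (2*u) - 1)) = (1+\<mu>)/2 * exp u + (1-\<mu>)/2 * exp (-u)"
  proof -
    have e: "exp (-u) * exp (2*u) = exp u" by (simp add: exp_add[symmetric])
    have "exp (-u) * (1 + q * (exp (2*u) - 1)) = exp (-u) + q * (exp (-u) * exp (2*u)) - q * exp (-u)"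
      by (simp add: algebra_simps)
    also have "\<dots> = (1+\<mu>)/2 * exp u + (1-\<mu>)/2 * exp (-u)"
      unfolding e q_def by (simp add: field_simps)
    finally show ?thesis .
  qed
  moreover have "exp (-u) * exp (2*u*q + u\<^sup>2/2) = exp (\<mu>*u + u\<^sup>2/2)"
    by (simp add: exp_add[symmetric] q_def algebra_simps)
  ultimately show ?thesis by simp
qed

lemma hoeff:
  fixes u \<mu> :: real assumes "\<bar>\<mu>\<bar> \<le> 1"
  shows "(1+\<mu>)/2 * exp u + (1-\<mu>)/2 * exp (-u) \<le> exp (\<mu>*u + u\<^sup>2/2)"
proof (cases "0 \<le> u")
  case True thus ?thesis using hoeff_pos assms by blast
next
  case False
  have "(1+(-\<mu>))/2 * exp (-u) + (1-(-\<mu>))/2 * exp (-(-u)) \<le> exp ((-\<mu>)*(-u) + (-u)\<^sup>2/2)"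
    using hoeff_pos[of "-\<mu>" "-u"] assms False by simp
  thus ?thesis by (simp add: algebra_simps)
qed

lemma step_real:
  fixes \<alpha> a X u :: real
  assumes "\<bar>\<alpha>\<bar> \<le> a" "0 < a"
  defines "p \<equiv> min 1 ((1/2) * max 0 (1 - \<alpha>/a))"
  shows "0 \<le> p" "p \<le> 1" "p * exp (X + u) + (1 - p) * exp (X - u) \<le> exp (X - u*\<alpha>/a + u\<^sup>2/2)"
proof -
  have aa: "-a \<le> \<alpha>" "\<alpha> \<le> a" using assms(1) by (simp_all add: abs_le_iff)
  have r1: "-1 \<le> \<alpha>/a" "\<alpha>/a \<le> 1" using aa assms(2) by (simp_all add: le_divide_eq divide_le_eq)
  hence r: "\<bar>\<alpha>/a\<bar> \<le> 1" by (simp add: abs_le_iff)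
  from r1 have m: "max 0 (1 - \<alpha>/a) = 1 - \<alpha>/a" by simp
  have "(1/2) * (1 - \<alpha>/a) \<le> 1" using r1 by simp
  hence pe: "p = (1 + (-(\<alpha>/a)))/2" unfolding p_def m by simp
  thus "0 \<le> p" "p \<le> 1" using r1 by simp_all
  have e1: "exp (X + u) = exp X * exp u" by (rule exp_add)
  have e2: "exp (X - u) = exp X * exp (-u)" by (simp add: exp_diff exp_minus divide_inverse)
  have "p * exp (X + u) + (1 - p) * exp (X - u) = exp X * ((1 + (-(\<alpha>/a)))/2 * exp u + (1 - (-(\<alpha>/a)))/2 * exp (-u))"
    unfolding e1 e2 pe using assms(2) by (simp add: field_simps)
  also have "\<dots> \<le> exp X * exp ((-(\<alpha>/a))*u + u\<^sup>2/2)"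
    by (rule mult_left_mono[OF hoeff exp_ge_zero]) (use r in simp)
  also have "\<dots> = exp (X + ((-(\<alpha>/a))*u + u\<^sup>2/2))" by (rule mult_exp_exp)
  also have "X + ((-(\<alpha>/a))*u + u\<^sup>2/2) = X - u*\<alpha>/a + u\<^sup>2/2" by simp
  finally show "p * exp (X + u) + (1 - p) * exp (X - u) \<le> exp (X - u*\<alpha>/a + u\<^sup>2/2)" .
qed


fun goodl :: "('a \<Rightarrow> 'h::real_inner) \<Rightarrow> real \<Rightarrow> 'a list \<Rightarrow> 'h \<Rightarrow> real \<Rightarrow> bool list \<Rightarrow> bool" where
  "goodl \<Phi> c (x # x' # rest) \<psi> bmax (\<eta> # es) =
     (let f = \<Phi> x - \<Phi> x'; bm = max (norm f) bmax in
      \<bar>inner \<psi> f\<bar> \<le> norm f * bm * c \<and> goodl \<Phi> c rest (\<psi> + (if \<eta> then 1 else -1) *\<^sub>R f) bm es)"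
| "goodl \<Phi> c _ \<psi> bmax _ = True"

fun sel :: "'a list \<Rightarrow> bool list \<Rightarrow> 'a list" where
  "sel (x # x' # rest) (\<eta> # es) = (if \<eta> then x' else x) # sel rest es"
| "sel _ _ = []"

fun bmf :: "('a \<Rightarrow> 'h::real_normed_vector) \<Rightarrow> 'a list \<Rightarrow> real \<Rightarrow> real" where
  "bmf \<Phi> (x # x' # rest) bm = bmf \<Phi> rest (max (norm (\<Phi> x - \<Phi> x')) bm)"
| "bmf \<Phi> _ bm = bm"

definition Dl :: "('a \<Rightarrow> 'h::real_vector) \<Rightarrow> 'a list \<Rightarrow> 'a list \<Rightarrow> 'h" where
  "Dl \<Phi> xs S = sum_list (map \<Phi> xs) - 2 *\<^sub>R sum_list (map \<Phi> S)"

definition sG :: "real \<Rightarrow> real \<Rightarrow> real" where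
  "sG c B = B\<^sup>2 * c\<^sup>2 / (2*c - 1)"

lemma kh_loop_supp:
  "(S, es) \<in> set_pmf (kh_loop \<Phi> c xs \<psi> bm) \<Longrightarrow>
     S = sel xs es \<and> length S = length xs div 2 \<and> set S \<subseteq> set xs"
proof (induction \<Phi> c xs \<psi> bm arbitrary: S es rule: kh_loop.induct)
  case (1 \<Phi> c x x' rest \<psi> bmax)
  from "1.prems" obtain \<eta> S' es' where
    h: "\<eta> \<in> set_pmf (bernoulli_pmf (min 1 ((1/2) * max 0 (1 - inner \<psi> (\<Phi> x - \<Phi> x') /
          (norm (\<Phi> x - \<Phi> x') * max (norm (\<Phi> x - \<Phi> x')) bmax * c)))))"
       "(S', es') \<in> set_pmf (kh_loop \<Phi> c rest (\<psi> + (if \<eta> then 1 else -1) *\<^sub>R (\<Phi> x - \<Phi> x'))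
            (max (norm (\<Phi> x - \<Phi> x')) bmax))"
       "S = (if \<eta> then x' else x) # S'" "es = \<eta> # es'"
    by (auto simp: Let_def)
  from "1.IH"[OF refl refl refl refl refl refl h(1) refl refl h(2)] h(3,4)
  show ?case by auto
qed auto

lemma Dl_step:
  "\<psi> + Dl \<Phi> (x # x' # rest) ((if \<eta> then x' else x) # S)
   = (\<psi> + (if \<eta> then 1 else -1) *\<^sub>R (\<Phi> x - \<Phi> x')) + Dl \<Phi> rest S"
  by (cases \<eta>) (simp_all add: Dl_def algebra_simps scaleR_2)

lemma sG_mono:
  assumes "1/2 < c" "0 \<le> B" "B \<le> B'"
  shows "sG c B \<le> sG c B'"
proof -
  have "B\<^sup>2 \<le> B'\<^sup>2" using assms by (simp add: power_mono)
  hence "B\<^sup>2 * c\<^sup>2 \<le> B'\<^sup>2 * c\<^sup>2" by (simp add: mult_right_mono)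
  thus ?thesis unfolding sG_def using assms by (simp add: divide_right_mono)
qed

lemma sG_nonneg: "1/2 < c \<Longrightarrow> 0 \<le> sG c B"
  unfolding sG_def by simp

lemma sG_key:
  assumes "1/2 < c" "0 \<le> b" "b \<le> B"
  shows "(b*B*c)\<^sup>2 \<le> sG c B * (2*(b*B*c) - b\<^sup>2)"
proof -
  have d: "0 < 2*c - 1" using assms by simp
  have e1: "sG c B * (2*(b*B*c) - b\<^sup>2) - (b*B*c)\<^sup>2 = (B\<^sup>2 * c\<^sup>2 * (2*(b*B*c) - b\<^sup>2) - (b*B*c)\<^sup>2 * (2*c-1)) / (2*c-1)"
    unfolding sG_def using d by (simp add: field_simps)
  have e2: "B\<^sup>2 * c\<^sup>2 * (2*(b*B*c) - b\<^sup>2) - (b*B*c)\<^sup>2 * (2*c-1) = B\<^sup>2 * c\<^sup>2 * (2*b*c*(B - b))"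
    by (simp add: algebra_simps power2_eq_square)
  have "0 \<le> B\<^sup>2 * c\<^sup>2 * (2*b*c*(B - b))" using assms by simp
  hence "0 \<le> B\<^sup>2 * c\<^sup>2 * (2*b*c*(B - b)) / (2*c-1)" using d by simp
  thus ?thesis using e1[unfolded e2] by linarith
qed

lemma inv_alg:
  fixes s s' a b t u nG nG' :: real
  assumes "0 \<le> s" "s \<le> s'" "a\<^sup>2 \<le> s'*(2*a - b\<^sup>2)" "u = t*a" "nG = nG' - 2*t*u + t\<^sup>2*b\<^sup>2" "0 \<le> nG"
  shows "u\<^sup>2/2 + s*nG/2 \<le> s'*nG'/2"
proof -
  have "s*nG \<le> s'*nG" using assms by (simp add: mult_right_mono)
  moreover have "u\<^sup>2 + s'*nG = s'*nG' + t\<^sup>2 * (a\<^sup>2 - s'*(2*a - b\<^sup>2))"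
    unfolding assms(4,5) by (simp add: algebra_simps power2_eq_square)
  moreover have "t\<^sup>2 * (a\<^sup>2 - s'*(2*a - b\<^sup>2)) \<le> 0"
    using assms(3) by (simp add: mult_nonneg_nonpos)
  ultimately show ?thesis by linarith
qed


lemma push:
  fixes \<psi> f G' :: "'h::real_inner"
  assumes "\<bar>inner \<psi> f\<bar> \<le> a" "0 \<le> a" "a = 0 \<Longrightarrow> f = 0"
  defines "p \<equiv> min 1 ((1/2) * max 0 (1 - inner \<psi> f / a))"
  shows "p * exp (inner G' (\<psi> + f) + Q') + (1-p) * exp (inner G' (\<psi> - f) + Q')
         \<le> exp (inner (G' - (inner G' f / a) *\<^sub>R f) \<psi> + (Q' + (inner G' f)\<^sup>2/2))"
proof (cases "a = 0")
  case True
  hence f0: "f = 0" using assms by simp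
  have "p = 1/2" unfolding p_def using True by simp
  thus ?thesis using f0 True by (simp add: field_simps)
next
  case False
  hence ap: "0 < a" using assms by simp
  define X where "X = inner G' \<psi> + Q'"
  define u where "u = inner G' f"
  have "p * exp (X + u) + (1 - p) * exp (X - u) \<le> exp (X - u*(inner \<psi> f)/a + u\<^sup>2/2)"
    unfolding p_def by (rule step_real(3)[OF assms(1) ap])
  moreover have "inner G' (\<psi> + f) + Q' = X + u" "inner G' (\<psi> - f) + Q' = X - u"
    by (simp_all add: X_def u_def inner_add_right inner_diff_right)
  moreover have "X - u*(inner \<psi> f)/a + u\<^sup>2/2 = inner (G' - (inner G' f / a) *\<^sub>R f) \<psi> + (Q' + (inner G' f)\<^sup>2/2)"
    by (simp add: X_def u_def inner_diff_left inner_commute[of f \<psi>])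
  ultimately show ?thesis by simp
qed

lemma push_p01: "0 \<le> min 1 ((1/2) * max 0 (y::real))" "min 1 ((1/2) * max 0 y) \<le> 1"
  by auto

lemma inv_step:
  fixes f G' :: "'h::real_inner"
  assumes "1/2 < c" "0 \<le> bm"
  shows "(Q' + (inner G' f)\<^sup>2/2) + sG c bm * (norm (G' - (inner G' f / (norm f * max (norm f) bm * c)) *\<^sub>R f))\<^sup>2/2
         \<le> Q' + sG c (max (norm f) bm) * (norm G')\<^sup>2/2"
proof (cases "f = 0")
  case True
  have "sG c bm \<le> sG c (max 0 bm)" using assms by simp
  hence "sG c bm * (norm G')\<^sup>2 \<le> sG c (max 0 bm) * (norm G')\<^sup>2" by (simp add: mult_right_mono)
  thus ?thesis using True by simp
next
  case False
  define b where "b = norm f"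
  define bm' where "bm' = max b bm"
  define a where "a = b * bm' * c"
  define u where "u = inner G' f"
  have bp: "0 < b" using False by (simp add: b_def)
  have bb: "b \<le> bm'" "0 \<le> bm'" using bp by (auto simp: bm'_def)
  have ap: "0 < a" using bp bb assms(1) unfolding a_def by (simp add: mult_pos_pos)
  have key: "a\<^sup>2 \<le> sG c bm' * (2*a - b\<^sup>2)"
    unfolding a_def by (rule sG_key[OF assms(1)]) (use bp bb in auto)
  have mono: "sG c bm \<le> sG c bm'" by (rule sG_mono) (use assms in \<open>auto simp: bm'_def\<close>)
  have nG: "(norm (G' - (u/a) *\<^sub>R f))\<^sup>2 = (norm G')\<^sup>2 - 2*(u/a)*u + (u/a)\<^sup>2 * b\<^sup>2"
    unfolding b_def power2_norm_eq_inner
    by (simp add: inner_diff_left inner_diff_right u_def inner_commute[of f G'] algebra_simps power2_eq_square)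
  have "u\<^sup>2/2 + sG c bm * (norm (G' - (u/a) *\<^sub>R f))\<^sup>2/2 \<le> sG c bm' * (norm G')\<^sup>2/2"
    by (rule inv_alg[OF sG_nonneg[OF assms(1)] mono key _ nG]) (use ap in simp_all)
  thus ?thesis by (simp add: u_def a_def bm'_def b_def)
qed

lemma ennreal_comb:
  fixes A B p :: real and VT VF :: ennreal
  assumes "VT \<le> ennreal A" "VF \<le> ennreal B" "0 \<le> p" "p \<le> 1" "0 \<le> A" "0 \<le> B"
  shows "VT * ennreal p + VF * ennreal (1 - p) \<le> ennreal (p * A + (1-p) * B)"
proof -
  have "VT * ennreal p + VF * ennreal (1 - p) \<le> ennreal A * ennreal p + ennreal B * ennreal (1 - p)"
    using assms by (intro add_mono mult_right_mono) auto
  also have "\<dots> = ennreal (p * A + (1-p) * B)"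
  proof -
    have "ennreal (p*A + (1-p)*B) = ennreal (p*A) + ennreal ((1-p)*B)"
      by (rule ennreal_plus) (use assms in auto)
    also have "ennreal (p*A) = ennreal A * ennreal p"
      using ennreal_mult[OF assms(3) assms(5)] by (simp add: mult.commute)
    also have "ennreal ((1-p)*B) = ennreal B * ennreal (1-p)"
      using ennreal_mult[of "1-p" B] assms by (simp add: mult.commute)
    finally show ?thesis by simp
  qed
  finally show ?thesis .
qed


lemma kh_loop_cons:
  "kh_loop \<Phi> c (x # x' # rest) \<psi> bm =
     bind_pmf (bernoulli_pmf (min 1 ((1/2) * max 0 (1 - inner \<psi> (\<Phi> x - \<Phi> x') /
        (norm (\<Phi> x - \<Phi> x') * max (norm (\<Phi> x - \<Phi> x')) bm * c)))))
      (\<lambda>\<eta>. map_pmf (\<lambda>(S, es). ((if \<eta> then x' else x) # S, \<eta> # es))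
         (kh_loop \<Phi> c rest (\<psi> + (if \<eta> then 1 else -1) *\<^sub>R (\<Phi> x - \<Phi> x')) (max (norm (\<Phi> x - \<Phi> x')) bm)))"
  by (simp add: Let_def)

lemma goodl_cons:
  "goodl \<Phi> c (x # x' # rest) \<psi> bm (\<eta> # es) =
    (\<bar>inner \<psi> (\<Phi> x - \<Phi> x')\<bar> \<le> norm (\<Phi> x - \<Phi> x') * max (norm (\<Phi> x - \<Phi> x')) bm * c \<and>
     goodl \<Phi> c rest (\<psi> + (if \<eta> then 1 else -1) *\<^sub>R (\<Phi> x - \<Phi> x')) (max (norm (\<Phi> x - \<Phi> x')) bm) es)"
  by (simp add: Let_def)

definition Jint :: "('a \<Rightarrow> 'h::real_inner) \<Rightarrow> real \<Rightarrow> 'a list \<Rightarrow> 'h \<Rightarrow> real \<Rightarrow> 'h \<Rightarrow> ennreal" where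
  "Jint \<Phi> c xs \<psi> bm g = (\<integral>\<^sup>+\<omega>. (if goodl \<Phi> c xs \<psi> bm (snd \<omega>)
       then ennreal (exp (inner g (\<psi> + Dl \<Phi> xs (fst \<omega>)))) else 0) \<partial>kh_loop \<Phi> c xs \<psi> bm)"

lemma Jint_cons:
  fixes \<Phi> :: "'a \<Rightarrow> 'h::real_inner" and x x' :: 'a and \<psi> g :: 'h and bm c :: real
  defines "f \<equiv> \<Phi> x - \<Phi> x'"
  defines "a \<equiv> norm f * max (norm f) bm * c"
  defines "p \<equiv> min 1 ((1/2) * max 0 (1 - inner \<psi> f / a))"
  shows "Jint \<Phi> c (x # x' # rest) \<psi> bm g =
    (if \<bar>inner \<psi> f\<bar> \<le> a then
       Jint \<Phi> c rest (\<psi> + f) (max (norm f) bm) g * ennreal p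
     + Jint \<Phi> c rest (\<psi> - f) (max (norm f) bm) g * ennreal (1 - p) else 0)"
proof -
  have p01: "0 \<le> p" "p \<le> 1" unfolding p_def by auto
  define V where "V = (\<lambda>\<eta>. \<integral>\<^sup>+\<omega>. (if goodl \<Phi> c (x # x' # rest) \<psi> bm (snd \<omega>)
       then ennreal (exp (inner g (\<psi> + Dl \<Phi> (x # x' # rest) (fst \<omega>)))) else 0)
     \<partial>map_pmf (\<lambda>(S, es). ((if \<eta> then x' else x) # S, \<eta> # es))
         (kh_loop \<Phi> c rest (\<psi> + (if \<eta> then 1 else -1) *\<^sub>R f) (max (norm f) bm)))"
  have J: "Jint \<Phi> c (x # x' # rest) \<psi> bm g = V True * ennreal p + V False * ennreal (1 - p)"
    unfolding Jint_def kh_loop_cons V_def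
    by (subst nn_integral_bind_pmf, subst nn_integral_bernoulli_pmf) (use p01 in \<open>simp_all add: f_def a_def p_def\<close>)
  have V: "V \<eta> = (if \<bar>inner \<psi> f\<bar> \<le> a then
       Jint \<Phi> c rest (\<psi> + (if \<eta> then 1 else -1) *\<^sub>R f) (max (norm f) bm) g else 0)" for \<eta>
  proof -
    have DT: "\<psi> + Dl \<Phi> (x # x' # rest) (x' # S) = (\<psi> + f) + Dl \<Phi> rest S" for S
      by (simp add: Dl_def f_def algebra_simps scaleR_2)
    have DF: "\<psi> + Dl \<Phi> (x # x' # rest) (x # S) = (\<psi> - f) + Dl \<Phi> rest S" for S
      by (simp add: Dl_def f_def algebra_simps scaleR_2)
    show ?thesis
    proof (cases "\<bar>inner \<psi> f\<bar> \<le> a")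
      case True
      show ?thesis unfolding V_def Jint_def nn_integral_map_pmf using True
        by (cases \<eta>) (auto intro!: nn_integral_cong simp: split_beta goodl_cons DT DF f_def[symmetric] a_def)
    next
      case False
      show ?thesis unfolding V_def Jint_def nn_integral_map_pmf using False
        by (auto simp: split_beta goodl_cons f_def[symmetric] a_def)
    qed
  qed
  show ?thesis unfolding J V by simp
qed


lemma J:
  fixes \<Phi> :: "'a \<Rightarrow> 'h::real_inner" and g :: 'h
  assumes "even (length xs)" "1/2 < c" "0 \<le> bm"
  shows "\<exists>G Q. (\<forall>\<psi>. Jint \<Phi> c xs \<psi> bm g \<le> ennreal (exp (inner G \<psi> + Q))) \<and>
               Q + sG c bm * (norm G)\<^sup>2/2 \<le> sG c (bmf \<Phi> xs bm) * (norm g)\<^sup>2/2"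
  using assms
proof (induction xs arbitrary: bm rule: induct_list012)
  case 1
  show ?case
    by (intro exI[of _ g] exI[of _ 0] conjI allI) (simp_all add: Jint_def Dl_def)
next
  case (2 x) thus ?case by simp
next
  case (3 x x' rest)
  define f where "f = \<Phi> x - \<Phi> x'"
  define bm' where "bm' = max (norm f) bm"
  define a where "a = norm f * bm' * c"
  have bm': "0 \<le> bm'" using 3 by (simp add: bm'_def)
  obtain G' Q' where IH1: "\<And>\<psi>. Jint \<Phi> c rest \<psi> bm' g \<le> ennreal (exp (inner G' \<psi> + Q'))"
      and IH2: "Q' + sG c bm' * (norm G')\<^sup>2/2 \<le> sG c (bmf \<Phi> rest bm') * (norm g)\<^sup>2/2"
    using "3.IH"(1)[of bm'] "3.prems" bm' by auto
  define u where "u = inner G' f"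
  define G where "G = G' - (u/a) *\<^sub>R f"
  define Q where "Q = Q' + u\<^sup>2/2"
  have c0: "0 < c" using "3.prems" by simp
  have a0: "0 \<le> a" using bm' c0 by (simp add: a_def)
  have af: "f = 0" if "a = 0"
  proof (rule ccontr)
    assume "f \<noteq> 0"
    hence "0 < norm f" by simp
    moreover hence "0 < bm'" unfolding bm'_def by linarith
    ultimately have "0 < a" using c0 by (simp add: a_def)
    thus False using that by simp
  qed
  show ?case
  proof (intro exI[of _ G] exI[of _ Q] conjI allI)
    have "Q + sG c bm * (norm G)\<^sup>2/2 \<le> Q' + sG c bm' * (norm G')\<^sup>2/2"
      using inv_step[of c bm Q' G' f] "3.prems" by (simp add: G_def Q_def u_def a_def bm'_def)
    thus "Q + sG c bm * (norm G)\<^sup>2/2 \<le> sG c (bmf \<Phi> (x#x'#rest) bm) * (norm g)\<^sup>2/2"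
      using IH2 by (simp add: bm'_def f_def)
  next
    fix \<psi>
    define p where "p = min 1 ((1/2) * max 0 (1 - inner \<psi> f / a))"
    have JC: "Jint \<Phi> c (x#x'#rest) \<psi> bm g = (if \<bar>inner \<psi> f\<bar> \<le> a then
       Jint \<Phi> c rest (\<psi> + f) bm' g * ennreal p + Jint \<Phi> c rest (\<psi> - f) bm' g * ennreal (1 - p) else 0)"
      unfolding f_def bm'_def a_def p_def by (rule Jint_cons)
    show "Jint \<Phi> c (x#x'#rest) \<psi> bm g \<le> ennreal (exp (inner G \<psi> + Q))"
    proof (cases "\<bar>inner \<psi> f\<bar> \<le> a")
      case False thus ?thesis by (simp add: JC)
    next
      case True
      have "Jint \<Phi> c (x#x'#rest) \<psi> bm g = Jint \<Phi> c rest (\<psi> + f) bm' g * ennreal p + Jint \<Phi> c rest (\<psi> - f) bm' g * ennreal (1 - p)"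
        using True by (simp add: JC)
      also have "\<dots> \<le> ennreal (p * exp (inner G' (\<psi> + f) + Q') + (1-p) * exp (inner G' (\<psi> - f) + Q'))"
        by (rule ennreal_comb[OF IH1 IH1]) (auto simp: p_def)
      also have "\<dots> \<le> ennreal (exp (inner G \<psi> + Q))"
        using push[OF True a0 af, of G' Q'] by (intro ennreal_leI) (simp add: p_def G_def Q_def u_def)
      finally show ?thesis .
    qed
  qed
qed


definition Bint :: "('a \<Rightarrow> 'h::real_inner) \<Rightarrow> real \<Rightarrow> 'a list \<Rightarrow> 'h \<Rightarrow> real \<Rightarrow> ennreal" where
  "Bint \<Phi> c xs \<psi> bm = (\<integral>\<^sup>+\<omega>. (if goodl \<Phi> c xs \<psi> bm (snd \<omega>) then 0 else 1) \<partial>kh_loop \<Phi> c xs \<psi> bm)"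

lemma Bint_cons:
  fixes \<Phi> :: "'a \<Rightarrow> 'h::real_inner" and x x' :: 'a and \<psi> :: 'h and bm c :: real
  defines "f \<equiv> \<Phi> x - \<Phi> x'"
  defines "a \<equiv> norm f * max (norm f) bm * c"
  defines "p \<equiv> min 1 ((1/2) * max 0 (1 - inner \<psi> f / a))"
  shows "Bint \<Phi> c (x # x' # rest) \<psi> bm =
    (if \<bar>inner \<psi> f\<bar> \<le> a then
       Bint \<Phi> c rest (\<psi> + f) (max (norm f) bm) * ennreal p
     + Bint \<Phi> c rest (\<psi> - f) (max (norm f) bm) * ennreal (1 - p) else 1)"
proof -
  have p01: "0 \<le> p" "p \<le> 1" unfolding p_def by auto
  define V where "V = (\<lambda>\<eta>. \<integral>\<^sup>+\<omega>. (if goodl \<Phi> c (x # x' # rest) \<psi> bm (snd \<omega>) then 0 else 1)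
     \<partial>map_pmf (\<lambda>(S, es). ((if \<eta> then x' else x) # S, \<eta> # es))
         (kh_loop \<Phi> c rest (\<psi> + (if \<eta> then 1 else -1) *\<^sub>R f) (max (norm f) bm)))"
  have J: "Bint \<Phi> c (x # x' # rest) \<psi> bm = V True * ennreal p + V False * ennreal (1 - p)"
    unfolding Bint_def kh_loop_cons V_def
    by (subst nn_integral_bind_pmf, subst nn_integral_bernoulli_pmf) (use p01 in \<open>simp_all add: f_def a_def p_def\<close>)
  have V: "V \<eta> = (if \<bar>inner \<psi> f\<bar> \<le> a then
       Bint \<Phi> c rest (\<psi> + (if \<eta> then 1 else -1) *\<^sub>R f) (max (norm f) bm) else 1)" for \<eta>
  proof (cases "\<bar>inner \<psi> f\<bar> \<le> a")
    case True
    show ?thesis unfolding V_def Bint_def nn_integral_map_pmf using True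
      by (cases \<eta>) (auto intro!: nn_integral_cong simp: split_beta goodl_cons f_def[symmetric] a_def)
  next
    case False
    have "V \<eta> = (\<integral>\<^sup>+\<omega>. 1 \<partial>(kh_loop \<Phi> c rest (\<psi> + (if \<eta> then 1 else -1) *\<^sub>R f) (max (norm f) bm)))"
      unfolding V_def nn_integral_map_pmf using False
      by (intro nn_integral_cong) (auto simp: split_beta goodl_cons f_def[symmetric] a_def)
    also have "\<dots> = 1" by simp
    finally show ?thesis using False by simp
  qed
  show ?thesis
  proof (cases "\<bar>inner \<psi> f\<bar> \<le> a")
    case True thus ?thesis unfolding J V by simp
  next
    case False
    hence "Bint \<Phi> c (x # x' # rest) \<psi> bm = ennreal p + ennreal (1 - p)" unfolding J V by simp
    also have "\<dots> = 1" using p01 by (simp add: ennreal_plus[symmetric])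
    finally show ?thesis using False by simp
  qed
qed

lemma extra_term:
  fixes f :: "'h::real_inner"
  assumes "1/2 < c" "0 \<le> bm" "f \<noteq> 0"
  defines "bm' \<equiv> max (norm f) bm"
  defines "a \<equiv> norm f * bm' * c"
  defines "lam \<equiv> a / (sG c bm' * (norm f)\<^sup>2)"
  shows "-lam*a + sG c bm * (norm (lam *\<^sub>R f))\<^sup>2/2 \<le> -(c - 1/2)"
    "-lam*a + sG c bm * (norm (- lam *\<^sub>R f))\<^sup>2/2 \<le> -(c - 1/2)" "0 \<le> lam"
proof -
  define b where "b = norm f"
  have bp: "0 < b" using assms by (simp add: b_def)
  have bm'1: "b \<le> bm'" unfolding bm'_def b_def by simp
  have bm'p: "b \<le> bm'" "0 < bm'" using bp bm'1 by linarith+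
  have c0: "0 < c" "0 < 2*c - 1" using assms by auto
  have s'p: "0 < sG c bm'" unfolding sG_def using bm'p c0 by simp
  have ap: "0 < a" unfolding a_def using bp bm'p c0 by (simp add: b_def)
  have mono: "sG c bm \<le> sG c bm'" by (rule sG_mono) (use assms in \<open>auto simp: bm'_def\<close>)
  show lam0: "0 \<le> lam" unfolding lam_def using ap s'p by simp
  have nrm: "(norm (lam *\<^sub>R f))\<^sup>2 = lam\<^sup>2 * b\<^sup>2" "(norm (- lam *\<^sub>R f))\<^sup>2 = lam\<^sup>2 * b\<^sup>2"
    by (simp_all add: b_def power_mult_distrib)
  have slb: "sG c bm' * lam * b\<^sup>2 = a" unfolding lam_def b_def using s'p bp by (simp add: b_def field_simps)
  have "sG c bm * (lam\<^sup>2 * b\<^sup>2) \<le> sG c bm' * (lam\<^sup>2 * b\<^sup>2)"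
    using mono by (simp add: mult_right_mono)
  also have "sG c bm' * (lam\<^sup>2 * b\<^sup>2) = lam * a" using slb by (simp add: power2_eq_square algebra_simps)
  finally have A: "-lam*a + sG c bm * (lam\<^sup>2 * b\<^sup>2)/2 \<le> -(lam*a)/2" by simp
  have "lam * a = a\<^sup>2 / (sG c bm' * b\<^sup>2)" unfolding lam_def b_def by (simp add: power2_eq_square)
  also have "\<dots> = 2*c - 1"
    unfolding sG_def a_def b_def[symmetric] using bp bm'p c0 by (simp add: field_simps power2_eq_square)
  finally have "lam * a = 2*c - 1" .
  thus "-lam*a + sG c bm * (norm (lam *\<^sub>R f))\<^sup>2/2 \<le> -(c - 1/2)"
    "-lam*a + sG c bm * (norm (- lam *\<^sub>R f))\<^sup>2/2 \<le> -(c - 1/2)"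
    using A nrm by simp_all
qed


lemma Bad:
  fixes \<Phi> :: "'a \<Rightarrow> 'h::real_inner"
  assumes "even (length xs)" "1/2 < c" "0 \<le> bm"
  shows "\<exists>n (G::nat \<Rightarrow> 'h) (Q::nat \<Rightarrow> real).
     (\<forall>\<psi>. Bint \<Phi> c xs \<psi> bm \<le> ennreal (\<Sum>k<n. exp (inner (G k) \<psi> + Q k))) \<and>
     (\<Sum>k<n. exp (Q k + sG c bm * (norm (G k))\<^sup>2/2)) \<le> real (length xs) * exp (-(c - 1/2))"
  using assms
proof (induction xs arbitrary: bm rule: induct_list012)
  case 1
  show ?case by (intro exI[of _ 0]) (simp add: Bint_def)
next
  case (2 x) thus ?case by simp
next
  case (3 x x' rest)
  define f where "f = \<Phi> x - \<Phi> x'"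
  define bm' where "bm' = max (norm f) bm"
  define a where "a = norm f * bm' * c"
  define e where "e = exp (-(c - 1/2))"
  have e0: "0 \<le> e" by (simp add: e_def)
  have bm': "0 \<le> bm'" using 3 by (simp add: bm'_def)
  have ev: "even (length rest)" using "3.prems" by simp
  obtain n and G' :: "nat \<Rightarrow> 'h" and Q' :: "nat \<Rightarrow> real"
    where IH1: "\<And>\<psi>. Bint \<Phi> c rest \<psi> bm' \<le> ennreal (\<Sum>k<n. exp (inner (G' k) \<psi> + Q' k))"
      and IH2: "(\<Sum>k<n. exp (Q' k + sG c bm' * (norm (G' k))\<^sup>2/2)) \<le> real (length rest) * e"
    using "3.IH"(1)[OF ev "3.prems"(2) bm'] unfolding e_def by blast
  have c0: "0 < c" using "3.prems" by simp
  have a0: "0 \<le> a" using bm' c0 by (simp add: a_def)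
  have af: "f = 0" if "a = 0"
  proof (rule ccontr)
    assume "f \<noteq> 0"
    hence "0 < norm f" by simp
    moreover hence "0 < bm'" unfolding bm'_def by linarith
    ultimately have "0 < a" using c0 by (simp add: a_def)
    thus False using that by simp
  qed
  define Gt where "Gt = (\<lambda>k. G' k - (inner (G' k) f / a) *\<^sub>R f)"
  define Qt where "Qt = (\<lambda>k. Q' k + (inner (G' k) f)\<^sup>2/2)"
  have JC: "Bint \<Phi> c (x#x'#rest) \<psi> bm = (if \<bar>inner \<psi> f\<bar> \<le> a then
       Bint \<Phi> c rest (\<psi> + f) bm' * ennreal (min 1 ((1/2) * max 0 (1 - inner \<psi> f / a)))
     + Bint \<Phi> c rest (\<psi> - f) bm' * ennreal (1 - min 1 ((1/2) * max 0 (1 - inner \<psi> f / a))) else 1)" for \<psi>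
    unfolding f_def bm'_def a_def by (rule Bint_cons)
  have T1: "Bint \<Phi> c (x#x'#rest) \<psi> bm \<le> ennreal (\<Sum>k<n. exp (inner (Gt k) \<psi> + Qt k))"
    if "\<bar>inner \<psi> f\<bar> \<le> a" for \<psi>
  proof -
    define p where "p = min 1 ((1/2) * max 0 (1 - inner \<psi> f / a))"
    have "Bint \<Phi> c (x#x'#rest) \<psi> bm = Bint \<Phi> c rest (\<psi> + f) bm' * ennreal p + Bint \<Phi> c rest (\<psi> - f) bm' * ennreal (1 - p)"
      using that JC[of \<psi>] by (simp add: p_def)
    also have "\<dots> \<le> ennreal (p * (\<Sum>k<n. exp (inner (G' k) (\<psi> + f) + Q' k)) + (1-p) * (\<Sum>k<n. exp (inner (G' k) (\<psi> - f) + Q' k)))"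
      by (rule ennreal_comb[OF IH1 IH1]) (auto simp: p_def intro: sum_nonneg)
    also have "\<dots> \<le> ennreal (\<Sum>k<n. exp (inner (Gt k) \<psi> + Qt k))"
    proof (rule ennreal_leI)
      have "p * (\<Sum>k<n. exp (inner (G' k) (\<psi> + f) + Q' k)) + (1-p) * (\<Sum>k<n. exp (inner (G' k) (\<psi> - f) + Q' k))
          = (\<Sum>k<n. p * exp (inner (G' k) (\<psi> + f) + Q' k) + (1-p) * exp (inner (G' k) (\<psi> - f) + Q' k))"
        by (simp add: sum_distrib_left sum.distrib)
      also have "\<dots> \<le> (\<Sum>k<n. exp (inner (Gt k) \<psi> + Qt k))"
      proof (rule sum_mono)
        fix k
        show "p * exp (inner (G' k) (\<psi> + f) + Q' k) + (1-p) * exp (inner (G' k) (\<psi> - f) + Q' k) \<le> exp (inner (Gt k) \<psi> + Qt k)"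
          using push[OF that a0 af, of "G' k" "Q' k"] unfolding p_def Gt_def Qt_def .
      qed
      finally show "p * (\<Sum>k<n. exp (inner (G' k) (\<psi> + f) + Q' k)) + (1-p) * (\<Sum>k<n. exp (inner (G' k) (\<psi> - f) + Q' k))
          \<le> (\<Sum>k<n. exp (inner (Gt k) \<psi> + Qt k))" .
    qed
    finally show ?thesis .
  qed
  have T2: "(\<Sum>k<n. exp (Qt k + sG c bm * (norm (Gt k))\<^sup>2/2)) \<le> real (length rest) * e"
  proof -
    have "(\<Sum>k<n. exp (Qt k + sG c bm * (norm (Gt k))\<^sup>2/2)) \<le> (\<Sum>k<n. exp (Q' k + sG c bm' * (norm (G' k))\<^sup>2/2))"
    proof (rule sum_mono)
      fix k
      have "Qt k + sG c bm * (norm (Gt k))\<^sup>2/2 \<le> Q' k + sG c bm' * (norm (G' k))\<^sup>2/2"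
        using inv_step[of c bm "Q' k" "G' k" f] "3.prems" unfolding Gt_def Qt_def a_def bm'_def by simp
      thus "exp (Qt k + sG c bm * (norm (Gt k))\<^sup>2/2) \<le> exp (Q' k + sG c bm' * (norm (G' k))\<^sup>2/2)" by simp
    qed
    thus ?thesis using IH2 by linarith
  qed
  have len: "real (length (x#x'#rest)) * e = real (length rest) * e + e + e" by (simp add: algebra_simps)
  show ?case
  proof (cases "f = 0")
    case True
    have alw: "\<bar>inner \<psi> f\<bar> \<le> a" for \<psi> using True by (simp add: a_def)
    show ?thesis
    proof (intro exI[of _ n] exI[of _ Gt] exI[of _ Qt] conjI allI)
      show "Bint \<Phi> c (x # x' # rest) \<psi> bm \<le> ennreal (\<Sum>k<n. exp (inner (Gt k) \<psi> + Qt k))" for \<psi>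
        by (rule T1[OF alw])
      show "(\<Sum>k<n. exp (Qt k + sG c bm * (norm (Gt k))\<^sup>2/2)) \<le> real (length (x#x'#rest)) * exp (-(c - 1/2))"
        using T2 len e0 unfolding e_def by linarith
    qed
  next
    case False
    define lam where "lam = a / (sG c bm' * (norm f)\<^sup>2)"
    have E1: "-lam*a + sG c bm * (norm (lam *\<^sub>R f))\<^sup>2/2 \<le> -(c - 1/2)"
      unfolding lam_def a_def bm'_def by (rule extra_term(1)) (use "3.prems" False in auto)
    have E2: "-lam*a + sG c bm * (norm (- lam *\<^sub>R f))\<^sup>2/2 \<le> -(c - 1/2)"
      unfolding lam_def a_def bm'_def by (rule extra_term(2)) (use "3.prems" False in auto)
    have lam0: "0 \<le> lam"
      unfolding lam_def a_def bm'_def by (rule extra_term(3)) (use "3.prems" False in auto)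
    define G2 where "G2 = (\<lambda>k. if k < n then Gt k else if k = n then lam *\<^sub>R f else - lam *\<^sub>R f)"
    define Q2 where "Q2 = (\<lambda>k. if k < n then Qt k else -lam*a)"
    have sumsplit: "(\<Sum>k<Suc (Suc n). F k) = (\<Sum>k<n. F k) + F n + F (Suc n)" for F :: "nat \<Rightarrow> real"
      by simp
    show ?thesis
    proof (intro exI[of _ "Suc (Suc n)"] exI[of _ G2] exI[of _ Q2] conjI allI)
      fix \<psi>
      have S0: "(\<Sum>k<n. exp (inner (G2 k) \<psi> + Q2 k)) = (\<Sum>k<n. exp (inner (Gt k) \<psi> + Qt k))"
        by (rule sum.cong) (auto simp: G2_def Q2_def)
      have S: "(\<Sum>k<Suc (Suc n). exp (inner (G2 k) \<psi> + Q2 k)) = (\<Sum>k<n. exp (inner (Gt k) \<psi> + Qt k))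
           + exp (lam * inner \<psi> f - lam*a) + exp (- lam * inner \<psi> f - lam*a)"
        unfolding sumsplit S0 by (simp add: G2_def Q2_def inner_commute[of f \<psi>])
      have nn: "0 \<le> (\<Sum>k<n. exp (inner (Gt k) \<psi> + Qt k))" by (intro sum_nonneg) simp
      show "Bint \<Phi> c (x # x' # rest) \<psi> bm \<le> ennreal (\<Sum>k<Suc (Suc n). exp (inner (G2 k) \<psi> + Q2 k))"
      proof (cases "\<bar>inner \<psi> f\<bar> \<le> a")
        case True
        have "Bint \<Phi> c (x # x' # rest) \<psi> bm \<le> ennreal (\<Sum>k<n. exp (inner (Gt k) \<psi> + Qt k))" by (rule T1[OF True])
        also have "\<dots> \<le> ennreal (\<Sum>k<Suc (Suc n). exp (inner (G2 k) \<psi> + Q2 k))"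
          unfolding S by (intro ennreal_leI) (simp add: add_nonneg_nonneg)
        finally show ?thesis .
      next
        case False
        have B1: "Bint \<Phi> c (x # x' # rest) \<psi> bm = 1" using False JC[of \<psi>] by simp
        have "1 \<le> exp (lam * inner \<psi> f - lam*a) + exp (- lam * inner \<psi> f - lam*a)"
        proof (cases "a < inner \<psi> f")
          case True
          hence "0 \<le> lam * (inner \<psi> f - a)" using lam0 by simp
          hence "0 \<le> lam * inner \<psi> f - lam*a" by (simp add: algebra_simps)
          hence "1 \<le> exp (lam * inner \<psi> f - lam*a)" by simp
          thus ?thesis using exp_ge_zero[of "- lam * inner \<psi> f - lam*a"] by linarith
        next
          case False
          hence "inner \<psi> f < -a" using \<open>\<not> \<bar>inner \<psi> f\<bar> \<le> a\<close> by linarith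
          hence "0 \<le> lam * (- inner \<psi> f - a)" using lam0 by simp
          hence "0 \<le> - lam * inner \<psi> f - lam*a" by (simp add: algebra_simps)
          hence "1 \<le> exp (- lam * inner \<psi> f - lam*a)" by simp
          thus ?thesis using exp_ge_zero[of "lam * inner \<psi> f - lam*a"] by linarith
        qed
        hence "1 \<le> (\<Sum>k<Suc (Suc n). exp (inner (G2 k) \<psi> + Q2 k))" unfolding S using nn by linarith
        thus ?thesis unfolding B1 using ennreal_leI[of 1] by simp
      qed
    next
      have S0: "(\<Sum>k<n. exp (Q2 k + sG c bm * (norm (G2 k))\<^sup>2/2)) = (\<Sum>k<n. exp (Qt k + sG c bm * (norm (Gt k))\<^sup>2/2))"
        by (rule sum.cong) (auto simp: G2_def Q2_def)
      have "(\<Sum>k<Suc (Suc n). exp (Q2 k + sG c bm * (norm (G2 k))\<^sup>2/2)) =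
          (\<Sum>k<n. exp (Qt k + sG c bm * (norm (Gt k))\<^sup>2/2))
          + exp (-lam*a + sG c bm * (norm (lam *\<^sub>R f))\<^sup>2/2) + exp (-lam*a + sG c bm * (norm (- lam *\<^sub>R f))\<^sup>2/2)"
        unfolding sumsplit S0 by (simp add: G2_def Q2_def)
      also have "\<dots> \<le> real (length rest) * e + e + e"
        using T2 E1 E2 unfolding e_def by (intro add_mono) simp_all
      also have "\<dots> = real (length (x#x'#rest)) * exp (-(c - 1/2))" using len unfolding e_def by simp
      finally show "(\<Sum>k<Suc (Suc n). exp (Q2 k + sG c bm * (norm (G2 k))\<^sup>2/2)) \<le> real (length (x#x'#rest)) * exp (-(c - 1/2))" .
    qed
  qed
qed


lemma bmf_ge: "bm \<le> bmf \<Phi> xs bm"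
proof (induction xs arbitrary: bm rule: induct_list012)
  case (3 x y zs)
  show ?case using "3.IH"(1)[of "max (norm (\<Phi> x - \<Phi> y)) bm"] by simp
qed auto

lemma bmf_le:
  "(\<forall>x\<in>set xs. \<forall>y\<in>set xs. norm (\<Phi> x - \<Phi> y) \<le> B) \<Longrightarrow> bm \<le> B \<Longrightarrow> bmf \<Phi> xs bm \<le> B"
  by (induction xs arbitrary: bm rule: induct_list012) auto

lemma kh_supp:
  "(S, es) \<in> set_pmf (kh \<Phi> \<delta>' xs) \<Longrightarrow> S = sel xs es \<and> length S = length xs div 2 \<and> set S \<subseteq> set xs"
  unfolding kh_def by (rule kh_loop_supp)

lemma c_gt:
  assumes "0 < L" "0 < \<delta>'" "\<delta>' \<le> 1"
  shows "1/2 < 1/2 + ln (2 * real (2*L) / \<delta>')"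
proof -
  have "1 < 2 * real (2*L) / \<delta>'" using assms by (simp add: field_simps)
  thus ?thesis by simp
qed

lemma emb_diff:
  fixes \<Phi> :: "'a \<Rightarrow> 'h::real_inner"
  assumes "length xs = 2 * L" "length S = L" "0 < L"
  shows "emb \<Phi> xs - emb \<Phi> S = (1 / (2 * real L)) *\<^sub>R Dl \<Phi> xs S"
  using assms by (simp add: emb_def Dl_def scaleR_diff_right)

lemma round_J:
  fixes \<Phi> :: "'a \<Rightarrow> 'h::real_inner" and g :: 'h
  assumes "length xs = 2 * L" "0 < L" "0 < \<delta>'" "\<delta>' \<le> 1" "0 \<le> B"
    "\<forall>x\<in>set xs. \<forall>y\<in>set xs. norm (\<Phi> x - \<Phi> y) \<le> B"
  shows "(\<integral>\<^sup>+\<omega>. (if goodl \<Phi> (1/2 + ln (2 * real (length xs) / \<delta>')) xs 0 0 (snd \<omega>)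
           then ennreal (exp (inner g (emb \<Phi> xs - emb \<Phi> (fst \<omega>)))) else 0) \<partial>kh \<Phi> \<delta>' xs)
    \<le> ennreal (exp (sG (1/2 + ln (2 * real (length xs) / \<delta>')) B / (4 * (real L)\<^sup>2) * (norm g)\<^sup>2 / 2))"
proof -
  define c where "c = 1/2 + ln (2 * real (length xs) / \<delta>')"
  have c: "1/2 < c" unfolding c_def assms(1) by (rule c_gt) (use assms in auto)
  define g' where "g' = (1 / (2 * real L)) *\<^sub>R g"
  have ev: "even (length xs)" using assms by simp
  obtain G Q where J1: "\<And>\<psi>. Jint \<Phi> c xs \<psi> 0 g' \<le> ennreal (exp (inner G \<psi> + Q))"
     and J2: "Q + sG c 0 * (norm G)\<^sup>2/2 \<le> sG c (bmf \<Phi> xs 0) * (norm g')\<^sup>2/2"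
    using J[OF ev c, of 0 \<Phi> g'] by auto
  have "(\<integral>\<^sup>+\<omega>. (if goodl \<Phi> c xs 0 0 (snd \<omega>)
           then ennreal (exp (inner g (emb \<Phi> xs - emb \<Phi> (fst \<omega>)))) else 0) \<partial>kh \<Phi> \<delta>' xs)
       = Jint \<Phi> c xs 0 0 g'"
    unfolding Jint_def kh_def c_def[symmetric]
  proof (intro nn_integral_cong_AE AE_pmfI)
    fix \<omega> assume "\<omega> \<in> set_pmf (kh_loop \<Phi> c xs 0 0)"
    then obtain S es where \<omega>: "\<omega> = (S, es)" and "(S, es) \<in> set_pmf (kh \<Phi> \<delta>' xs)"
      unfolding kh_def c_def by (cases \<omega>) auto
    hence "length S = L" using kh_supp assms(1) by fastforce
    hence "emb \<Phi> xs - emb \<Phi> S = (1 / (2 * real L)) *\<^sub>R Dl \<Phi> xs S" using emb_diff assms by blast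
    thus "(if goodl \<Phi> c xs 0 0 (snd \<omega>) then ennreal (exp (inner g (emb \<Phi> xs - emb \<Phi> (fst \<omega>)))) else 0)
        = (if goodl \<Phi> c xs 0 0 (snd \<omega>) then ennreal (exp (inner g' (0 + Dl \<Phi> xs (fst \<omega>)))) else 0)"
      by (simp add: \<omega> g'_def)
  qed
  also have "\<dots> \<le> ennreal (exp Q)" using J1[of 0] by simp
  also have "\<dots> \<le> ennreal (exp (sG c B / (4 * (real L)\<^sup>2) * (norm g)\<^sup>2 / 2))"
  proof (intro ennreal_leI, subst exp_le_cancel_iff)
    have "0 \<le> sG c 0 * (norm G)\<^sup>2/2" using sG_nonneg[OF c] by simp
    hence "Q \<le> sG c (bmf \<Phi> xs 0) * (norm g')\<^sup>2/2" using J2 by linarith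
    also have "\<dots> \<le> sG c B * (norm g')\<^sup>2/2"
      using sG_mono[OF c _ bmf_le[OF assms(6)], of 0] bmf_ge[of 0 \<Phi> xs] assms(5)
      by (simp add: mult_right_mono divide_right_mono)
    also have "\<dots> = sG c B / (4 * (real L)\<^sup>2) * (norm g)\<^sup>2 / 2"
      using assms(2) by (simp add: g'_def power_divide power_mult_distrib field_simps)
    finally show "Q \<le> sG c B / (4 * (real L)\<^sup>2) * (norm g)\<^sup>2 / 2" .
  qed
  finally show ?thesis unfolding c_def .
qed

lemma round_B:
  fixes \<Phi> :: "'a \<Rightarrow> 'h::real_inner"
  assumes "length xs = 2 * L" "0 < L" "0 < \<delta>'" "\<delta>' \<le> 1"
  shows "(\<integral>\<^sup>+\<omega>. (if goodl \<Phi> (1/2 + ln (2 * real (length xs) / \<delta>')) xs 0 0 (snd \<omega>) then 0 else 1) \<partial>kh \<Phi> \<delta>' xs)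
    \<le> ennreal (\<delta>' / 2)"
proof -
  define c where "c = 1/2 + ln (2 * real (length xs) / \<delta>')"
  have c: "1/2 < c" unfolding c_def assms(1) by (rule c_gt) (use assms in auto)
  have ev: "even (length xs)" using assms by simp
  obtain n and G :: "nat \<Rightarrow> 'h" and Q :: "nat \<Rightarrow> real"
    where B1: "\<And>\<psi>. Bint \<Phi> c xs \<psi> 0 \<le> ennreal (\<Sum>k<n. exp (inner (G k) \<psi> + Q k))"
      and B2: "(\<Sum>k<n. exp (Q k + sG c 0 * (norm (G k))\<^sup>2/2)) \<le> real (length xs) * exp (-(c - 1/2))"
    using Bad[OF ev c, of 0 \<Phi>] by auto
  have "(\<integral>\<^sup>+\<omega>. (if goodl \<Phi> c xs 0 0 (snd \<omega>) then 0 else 1) \<partial>kh \<Phi> \<delta>' xs) = Bint \<Phi> c xs 0 0"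
    unfolding Bint_def kh_def c_def ..
  also have "\<dots> \<le> ennreal (\<Sum>k<n. exp (Q k))" using B1[of 0] by simp
  also have "\<dots> \<le> ennreal (\<delta>' / 2)"
  proof (rule ennreal_leI)
    have "(\<Sum>k<n. exp (Q k)) \<le> (\<Sum>k<n. exp (Q k + sG c 0 * (norm (G k))\<^sup>2/2))"
      by (rule sum_mono) (use sG_nonneg[OF c] in simp)
    also have "\<dots> \<le> real (length xs) * exp (-(c - 1/2))" by (rule B2)
    also have "exp (-(c - 1/2)) = \<delta>' / (2 * real (length xs))"
    proof -
      have pos: "0 < 2 * real (length xs) / \<delta>'" using assms by simp
      have "exp (-(c - 1/2)) = inverse (exp (ln (2 * real (length xs) / \<delta>')))"
        by (simp add: c_def exp_minus)
      also have "\<dots> = \<delta>' / (2 * real (length xs))" using pos by simp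
      finally show ?thesis .
    qed
    also have "real (length xs) * (\<delta>' / (2 * real (length xs))) = \<delta>' / 2"
      using assms by simp
    finally show "(\<Sum>k<n. exp (Q k)) \<le> \<delta>' / 2" .
  qed
  finally show ?thesis unfolding c_def .
qed


fun GoodR :: "('a \<Rightarrow> 'h::real_inner) \<Rightarrow> real \<Rightarrow> nat \<Rightarrow> 'a list \<Rightarrow> bool list list \<Rightarrow> bool" where
  "GoodR \<Phi> \<delta>' 0 xs ess = True"
| "GoodR \<Phi> \<delta>' (Suc j) xs ess = (case ess of [] \<Rightarrow> False | es # ess' \<Rightarrow>
     goodl \<Phi> (1/2 + ln (2 * real (length xs) / \<delta>')) xs 0 0 es \<and> GoodR \<Phi> \<delta>' j (sel xs es) ess')"

definition tm :: "real \<Rightarrow> real \<Rightarrow> nat \<Rightarrow> nat \<Rightarrow> real" where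
  "tm B \<delta>' n i = sG (1/2 + ln (2 * real (n * 2^(Suc i)) / \<delta>')) B / (4 * (real (n * 2^i))\<^sup>2)"

lemma rkh_iter_Suc_int:
  "(\<integral>\<^sup>+\<omega>. F \<omega> \<partial>rkh_iter \<Phi> \<delta>' (Suc j) xs) =
   (\<integral>\<^sup>+\<omega>. (\<integral>\<^sup>+\<omega>'. F (fst \<omega>', snd \<omega> # snd \<omega>') \<partial>rkh_iter \<Phi> \<delta>' j (fst \<omega>)) \<partial>kh \<Phi> \<delta>' xs)"
proof -
  have "(\<integral>\<^sup>+\<omega>. F \<omega> \<partial>rkh_iter \<Phi> \<delta>' (Suc j) xs) =
     (\<integral>\<^sup>+x. (\<integral>\<^sup>+y. F y \<partial>(case x of (S, es) \<Rightarrow> map_pmf (\<lambda>(T, ess). (T, es # ess)) (rkh_iter \<Phi> \<delta>' j S))) \<partial>kh \<Phi> \<delta>' xs)"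
    by (simp only: rkh_iter.simps nn_integral_bind_pmf)
  also have "\<dots> = (\<integral>\<^sup>+\<omega>. (\<integral>\<^sup>+\<omega>'. F (fst \<omega>', snd \<omega> # snd \<omega>') \<partial>rkh_iter \<Phi> \<delta>' j (fst \<omega>)) \<partial>kh \<Phi> \<delta>' xs)"
  proof (intro nn_integral_cong)
    fix x :: "'a list \<times> bool list"
    obtain S es where x: "x = (S, es)" by (cases x)
    show "(\<integral>\<^sup>+y. F y \<partial>(case x of (S, es) \<Rightarrow> map_pmf (\<lambda>(T, ess). (T, es # ess)) (rkh_iter \<Phi> \<delta>' j S)))
        = (\<integral>\<^sup>+\<omega>'. F (fst \<omega>', snd x # snd \<omega>') \<partial>rkh_iter \<Phi> \<delta>' j (fst x))"
      unfolding x by (simp add: nn_integral_map_pmf split_beta)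
  qed
  finally show ?thesis .
qed

lemma rounds_J:
  fixes \<Phi> :: "'a \<Rightarrow> 'h::real_inner" and g :: 'h
  assumes "length xs = n * 2^j" "0 < n" "0 < \<delta>'" "\<delta>' \<le> 1" "0 \<le> B"
    "\<forall>x\<in>set xs. \<forall>y\<in>set xs. norm (\<Phi> x - \<Phi> y) \<le> B"
  shows "(\<integral>\<^sup>+\<omega>. (if GoodR \<Phi> \<delta>' j xs (snd \<omega>) then ennreal (exp (inner g (emb \<Phi> xs - emb \<Phi> (fst \<omega>)))) else 0)
           \<partial>rkh_iter \<Phi> \<delta>' j xs) \<le> ennreal (exp ((\<Sum>i<j. tm B \<delta>' n i) * (norm g)\<^sup>2/2))"
  using assms
proof (induction j arbitrary: xs)
  case 0
  show ?case by simp
next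
  case (Suc j)
  define L where "L = n * 2^j"
  have len: "length xs = 2 * L" using Suc.prems by (simp add: L_def)
  have L0: "0 < L" using Suc.prems by (simp add: L_def)
  define K where "K = exp ((\<Sum>i<j. tm B \<delta>' n i) * (norm g)\<^sup>2/2)"
  define gd where "gd = (\<lambda>es. goodl \<Phi> (1/2 + ln (2 * real (length xs) / \<delta>')) xs 0 0 es)"
  define F0 where "F0 = (\<lambda>\<omega>::'a list \<times> bool list. if gd (snd \<omega>) then ennreal (exp (inner g (emb \<Phi> xs - emb \<Phi> (fst \<omega>)))) else 0)"
  define F where "F = (\<lambda>\<omega>::'a list \<times> bool list list. if GoodR \<Phi> \<delta>' (Suc j) xs (snd \<omega>) then ennreal (exp (inner g (emb \<Phi> xs - emb \<Phi> (fst \<omega>)))) else 0)"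
  have inner: "(\<integral>\<^sup>+\<omega>'. F (fst \<omega>', es # snd \<omega>') \<partial>rkh_iter \<Phi> \<delta>' j S) \<le> F0 (S, es) * ennreal K"
    if "(S, es) \<in> set_pmf (kh \<Phi> \<delta>' xs)" for S es
  proof -
    from kh_supp[OF that] len have S: "S = sel xs es" "length S = L" "set S \<subseteq> set xs" by auto
    have IH: "(\<integral>\<^sup>+\<omega>. (if GoodR \<Phi> \<delta>' j S (snd \<omega>) then ennreal (exp (inner g (emb \<Phi> S - emb \<Phi> (fst \<omega>)))) else 0)
           \<partial>rkh_iter \<Phi> \<delta>' j S) \<le> ennreal K"
      unfolding K_def by (rule Suc.IH) (use Suc.prems S in \<open>auto simp: L_def\<close>)
    have Fe: "F (T, es # ess) = (if gd es \<and> GoodR \<Phi> \<delta>' j S ess then ennreal (exp (inner g (emb \<Phi> xs - emb \<Phi> T))) else 0)" for T ess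
      by (simp add: F_def gd_def S(1))
    show ?thesis
    proof (cases "gd es")
      case False
      thus ?thesis by (simp add: Fe)
    next
      case True
      define E0 where "E0 = exp (inner g (emb \<Phi> xs - emb \<Phi> S))"
      have "(\<integral>\<^sup>+\<omega>'. F (fst \<omega>', es # snd \<omega>') \<partial>rkh_iter \<Phi> \<delta>' j S)
          = (\<integral>\<^sup>+\<omega>. ennreal E0 * (if GoodR \<Phi> \<delta>' j S (snd \<omega>) then ennreal (exp (inner g (emb \<Phi> S - emb \<Phi> (fst \<omega>)))) else 0) \<partial>rkh_iter \<Phi> \<delta>' j S)"
      proof (intro nn_integral_cong)
        fix \<omega> :: "'a list \<times> bool list list"
        have "exp (inner g (emb \<Phi> xs - emb \<Phi> (fst \<omega>))) = E0 * exp (inner g (emb \<Phi> S - emb \<Phi> (fst \<omega>)))"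
          unfolding E0_def exp_add[symmetric] inner_add_right[symmetric] by simp
        thus "F (fst \<omega>, es # snd \<omega>) = ennreal E0 * (if GoodR \<Phi> \<delta>' j S (snd \<omega>) then ennreal (exp (inner g (emb \<Phi> S - emb \<Phi> (fst \<omega>)))) else 0)"
          using True Fe[of "fst \<omega>" "snd \<omega>"] by (simp add: ennreal_mult E0_def)
      qed
      also have "\<dots> = ennreal E0 * (\<integral>\<^sup>+\<omega>. (if GoodR \<Phi> \<delta>' j S (snd \<omega>) then ennreal (exp (inner g (emb \<Phi> S - emb \<Phi> (fst \<omega>)))) else 0) \<partial>rkh_iter \<Phi> \<delta>' j S)"
        by (rule nn_integral_cmult) simp
      also have "\<dots> \<le> ennreal E0 * ennreal K" by (intro mult_left_mono IH) simp
      also have "\<dots> = F0 (S, es) * ennreal K" using True by (simp add: F0_def E0_def)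
      finally show ?thesis .
    qed
  qed
  have "(\<integral>\<^sup>+\<omega>. F \<omega> \<partial>rkh_iter \<Phi> \<delta>' (Suc j) xs) = (\<integral>\<^sup>+\<omega>. (\<integral>\<^sup>+\<omega>'. F (fst \<omega>', snd \<omega> # snd \<omega>') \<partial>rkh_iter \<Phi> \<delta>' j (fst \<omega>)) \<partial>kh \<Phi> \<delta>' xs)"
    by (rule rkh_iter_Suc_int)
  also have "\<dots> \<le> (\<integral>\<^sup>+\<omega>. F0 \<omega> * ennreal K \<partial>kh \<Phi> \<delta>' xs)"
  proof (intro nn_integral_mono_AE AE_pmfI)
    fix \<omega> assume "\<omega> \<in> set_pmf (kh \<Phi> \<delta>' xs)"
    thus "(\<integral>\<^sup>+\<omega>'. F (fst \<omega>', snd \<omega> # snd \<omega>') \<partial>rkh_iter \<Phi> \<delta>' j (fst \<omega>)) \<le> F0 \<omega> * ennreal K"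
      using inner[of "fst \<omega>" "snd \<omega>"] by simp
  qed
  also have "\<dots> = (\<integral>\<^sup>+\<omega>. F0 \<omega> \<partial>kh \<Phi> \<delta>' xs) * ennreal K" by (rule nn_integral_multc) simp
  also have "\<dots> \<le> ennreal (exp (tm B \<delta>' n j * (norm g)\<^sup>2/2)) * ennreal K"
  proof (intro mult_right_mono)
    have "(\<integral>\<^sup>+\<omega>. F0 \<omega> \<partial>kh \<Phi> \<delta>' xs) \<le> ennreal (exp (sG (1/2 + ln (2 * real (length xs) / \<delta>')) B / (4 * (real L)\<^sup>2) * (norm g)\<^sup>2 / 2))"
      unfolding F0_def gd_def by (rule round_J[OF len L0]) (use Suc.prems in auto)
    also have "sG (1/2 + ln (2 * real (length xs) / \<delta>')) B / (4 * (real L)\<^sup>2) = tm B \<delta>' n j"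
      unfolding tm_def L_def Suc.prems(1) ..
    finally show "(\<integral>\<^sup>+\<omega>. F0 \<omega> \<partial>kh \<Phi> \<delta>' xs) \<le> ennreal (exp (tm B \<delta>' n j * (norm g)\<^sup>2/2))" .
  qed simp
  also have "\<dots> = ennreal (exp ((\<Sum>i<Suc j. tm B \<delta>' n i) * (norm g)\<^sup>2/2))"
  proof -
    have "exp (tm B \<delta>' n j * (norm g)\<^sup>2/2) * K = exp (tm B \<delta>' n j * (norm g)\<^sup>2/2 + (\<Sum>i<j. tm B \<delta>' n i) * (norm g)\<^sup>2/2)"
      unfolding K_def by (rule mult_exp_exp)
    also have "tm B \<delta>' n j * (norm g)\<^sup>2/2 + (\<Sum>i<j. tm B \<delta>' n i) * (norm g)\<^sup>2/2 = (\<Sum>i<Suc j. tm B \<delta>' n i) * (norm g)\<^sup>2/2"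
      by (simp add: distrib_right add_divide_distrib)
    finally have "exp (tm B \<delta>' n j * (norm g)\<^sup>2/2) * K = exp ((\<Sum>i<Suc j. tm B \<delta>' n i) * (norm g)\<^sup>2/2)" .
    thus ?thesis by (simp add: ennreal_mult[symmetric] K_def)
  qed
  finally show ?case unfolding F_def .
qed

lemma rounds_B:
  fixes \<Phi> :: "'a \<Rightarrow> 'h::real_inner"
  assumes "length xs = n * 2^j" "0 < n" "0 < \<delta>'" "\<delta>' \<le> 1"
  shows "(\<integral>\<^sup>+\<omega>. (if GoodR \<Phi> \<delta>' j xs (snd \<omega>) then 0 else 1) \<partial>rkh_iter \<Phi> \<delta>' j xs) \<le> ennreal (real j * \<delta>' / 2)"
  using assms
proof (induction j arbitrary: xs)
  case 0
  show ?case by simp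
next
  case (Suc j)
  define L where "L = n * 2^j"
  have len: "length xs = 2 * L" using Suc.prems by (simp add: L_def)
  have L0: "0 < L" using Suc.prems by (simp add: L_def)
  define gd where "gd = (\<lambda>es. goodl \<Phi> (1/2 + ln (2 * real (length xs) / \<delta>')) xs 0 0 es)"
  define F0 where "F0 = (\<lambda>\<omega>::'a list \<times> bool list. if gd (snd \<omega>) then 0 else (1::ennreal))"
  define F where "F = (\<lambda>\<omega>::'a list \<times> bool list list. if GoodR \<Phi> \<delta>' (Suc j) xs (snd \<omega>) then 0 else (1::ennreal))"
  have inner: "(\<integral>\<^sup>+\<omega>'. F (fst \<omega>', es # snd \<omega>') \<partial>rkh_iter \<Phi> \<delta>' j S) \<le> F0 (S, es) + ennreal (real j * \<delta>' / 2)"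
    if "(S, es) \<in> set_pmf (kh \<Phi> \<delta>' xs)" for S es
  proof -
    from kh_supp[OF that] len have S: "S = sel xs es" "length S = L" by auto
    have IH: "(\<integral>\<^sup>+\<omega>. (if GoodR \<Phi> \<delta>' j S (snd \<omega>) then 0 else 1) \<partial>rkh_iter \<Phi> \<delta>' j S) \<le> ennreal (real j * \<delta>' / 2)"
      by (rule Suc.IH) (use Suc.prems S in \<open>auto simp: L_def\<close>)
    have "(\<integral>\<^sup>+\<omega>'. F (fst \<omega>', es # snd \<omega>') \<partial>rkh_iter \<Phi> \<delta>' j S)
        \<le> (\<integral>\<^sup>+\<omega>. F0 (S, es) + (if GoodR \<Phi> \<delta>' j S (snd \<omega>) then 0 else 1) \<partial>rkh_iter \<Phi> \<delta>' j S)"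
      by (intro nn_integral_mono) (auto simp: F_def F0_def gd_def S(1))
    also have "\<dots> = F0 (S, es) + (\<integral>\<^sup>+\<omega>. (if GoodR \<Phi> \<delta>' j S (snd \<omega>) then 0 else 1) \<partial>rkh_iter \<Phi> \<delta>' j S)"
      by (subst nn_integral_add) simp_all
    also have "\<dots> \<le> F0 (S, es) + ennreal (real j * \<delta>' / 2)" by (intro add_left_mono IH)
    finally show ?thesis .
  qed
  have "(\<integral>\<^sup>+\<omega>. F \<omega> \<partial>rkh_iter \<Phi> \<delta>' (Suc j) xs) = (\<integral>\<^sup>+\<omega>. (\<integral>\<^sup>+\<omega>'. F (fst \<omega>', snd \<omega> # snd \<omega>') \<partial>rkh_iter \<Phi> \<delta>' j (fst \<omega>)) \<partial>kh \<Phi> \<delta>' xs)"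
    by (rule rkh_iter_Suc_int)
  also have "\<dots> \<le> (\<integral>\<^sup>+\<omega>. F0 \<omega> + ennreal (real j * \<delta>' / 2) \<partial>kh \<Phi> \<delta>' xs)"
  proof (intro nn_integral_mono_AE AE_pmfI)
    fix \<omega> assume "\<omega> \<in> set_pmf (kh \<Phi> \<delta>' xs)"
    thus "(\<integral>\<^sup>+\<omega>'. F (fst \<omega>', snd \<omega> # snd \<omega>') \<partial>rkh_iter \<Phi> \<delta>' j (fst \<omega>)) \<le> F0 \<omega> + ennreal (real j * \<delta>' / 2)"
      using inner[of "fst \<omega>" "snd \<omega>"] by simp
  qed
  also have "\<dots> = (\<integral>\<^sup>+\<omega>. F0 \<omega> \<partial>kh \<Phi> \<delta>' xs) + ennreal (real j * \<delta>' / 2)"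
    by (subst nn_integral_add) simp_all
  also have "\<dots> \<le> ennreal (\<delta>' / 2) + ennreal (real j * \<delta>' / 2)"
  proof (intro add_right_mono)
    show "(\<integral>\<^sup>+\<omega>. F0 \<omega> \<partial>kh \<Phi> \<delta>' xs) \<le> ennreal (\<delta>' / 2)"
      unfolding F0_def gd_def by (rule round_B[OF len L0]) (use Suc.prems in auto)
  qed
  also have "\<dots> = ennreal (\<delta>' / 2 + real j * \<delta>' / 2)"
    by (rule ennreal_plus[symmetric]) (use Suc.prems in auto)
  also have "\<delta>' / 2 + real j * \<delta>' / 2 = real (Suc j) * \<delta>' / 2"
    by (simp add: field_simps)
  finally show ?case unfolding F_def .
qed


lemma geo_sum:
  fixes \<alpha> :: real
  shows "(\<Sum>i<m. (\<alpha> + real i / 2) / 4^i) = (4/3)*\<alpha> + 2/9 - ((4/3)*\<alpha> + (2/9)*(3*real m + 1)) / 4^m"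
proof (induction m)
  case 0 show ?case by simp
next
  case (Suc m)
  show ?case unfolding sum.lessThan_Suc Suc.IH by (simp add: field_simps)
qed

lemma geo_bound:
  fixes \<alpha> :: real
  assumes "0 \<le> \<alpha>"
  shows "(\<Sum>i<m. (\<alpha> + real i / 2) / 4^i) \<le> (4/3)*\<alpha> + 2/9"
proof -
  have "0 \<le> ((4/3)*\<alpha> + (2/9)*(3*real m + 1)) / 4^m" using assms by simp
  thus ?thesis unfolding geo_sum by linarith
qed

lemma term_bound:
  fixes ll L0 K N :: real
  assumes "1 \<le> ll" "ll \<le> L0 + real i" "0 \<le> K" "0 < N"
  shows "sG (1/2 + ll) (2*K) / (4 * (N * 2^i)\<^sup>2) \<le> K\<^sup>2 / N\<^sup>2 * ((L0/2 + 5/8 + real i / 2) / 4^i)"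
proof -
  have l0: "0 < ll" using assms by simp
  have q: "(1/2 + ll)\<^sup>2 / (2*ll) \<le> L0/2 + 5/8 + real i / 2"
  proof -
    have "(1/2 + ll)\<^sup>2 \<le> 2*ll * (ll/2 + 5/8)"
      using assms(1) by (simp add: power2_eq_square algebra_simps)
    hence "(1/2 + ll)\<^sup>2 / (2*ll) \<le> ll/2 + 5/8" using l0 by (simp add: divide_le_eq mult.commute)
    thus ?thesis using assms(2) by linarith
  qed
  have sg: "sG (1/2 + ll) (2*K) = 4 * K\<^sup>2 * ((1/2 + ll)\<^sup>2 / (2*ll))"
    unfolding sG_def by (simp add: power_mult_distrib)
  have p4: "(4::real)^i = 2^i * 2^i" by (simp flip: power_mult_distrib)
  have pw: "(N * 2^i)\<^sup>2 = N\<^sup>2 * 4^i"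
    by (simp add: power2_eq_square p4 algebra_simps)
  have "sG (1/2 + ll) (2*K) / (4 * (N * 2^i)\<^sup>2) = K\<^sup>2 / N\<^sup>2 * (((1/2 + ll)\<^sup>2 / (2*ll)) / 4^i)"
    unfolding sg pw using assms(4) by (simp add: field_simps)
  also have "\<dots> \<le> K\<^sup>2 / N\<^sup>2 * ((L0/2 + 5/8 + real i / 2) / 4^i)"
    by (intro mult_left_mono divide_right_mono q) simp_all
  finally show ?thesis .
qed

lemma numeric:
  fixes n m :: nat and \<delta> K :: real
  assumes "0 < n" "0 < m" "0 < \<delta>" "\<delta> < 1" "0 \<le> K"
  shows "(\<Sum>i<m. tm (2*K) (\<delta> / real m) n i)
     \<le> (2 / (real n * sqrt 3) * sqrt (ln (6 * real n * real m / \<delta>)) * K)\<^sup>2"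
proof -
  define N where "N = real n"
  define M where "M = real m"
  define x0 where "x0 = 4 * N * M / \<delta>"
  define L0 where "L0 = ln x0"
  have N: "1 \<le> N" and M: "1 \<le> M" using assms by (simp_all add: N_def M_def)
  have NM: "1 * 1 \<le> N * M" by (rule mult_mono) (use N M in auto)
  have x0: "4 \<le> x0"
  proof -
    have "4 * \<delta> \<le> 4 * N * M" using NM assms(4) by simp
    thus ?thesis unfolding x0_def using assms(3) by (simp add: le_divide_eq)
  qed
  have x0p: "0 < x0" using x0 by simp
  have L0: "1 \<le> L0"
  proof -
    have "exp 1 \<le> x0" using exp_le x0 by simp
    thus ?thesis unfolding L0_def using ln_ge_iff[OF x0p] by simp
  qed
  have ln2: "0 \<le> ln (2::real)" "ln (2::real) \<le> 1" using ln_2_less_1 by simp_all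
  have ell: "ln (2 * real (n * 2^Suc i) / (\<delta> / real m)) = L0 + real i * ln 2" for i
  proof -
    have "2 * real (n * 2^Suc i) / (\<delta> / real m) = x0 * 2^i"
      unfolding x0_def N_def M_def using assms(3) by (simp add: field_simps)
    hence "ln (2 * real (n * 2^Suc i) / (\<delta> / real m)) = ln x0 + ln (2^i)"
      using x0p by (simp add: ln_mult)
    thus ?thesis by (simp add: L0_def ln_realpow)
  qed
  have T: "tm (2*K) (\<delta> / real m) n i \<le> K\<^sup>2 / N\<^sup>2 * ((L0/2 + 5/8 + real i / 2) / 4^i)" for i
  proof -
    have "tm (2*K) (\<delta> / real m) n i = sG (1/2 + (L0 + real i * ln 2)) (2*K) / (4 * (N * 2^i)\<^sup>2)"
      unfolding tm_def ell N_def by simp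
    also have "\<dots> \<le> K\<^sup>2 / N\<^sup>2 * ((L0/2 + 5/8 + real i / 2) / 4^i)"
    proof (rule term_bound)
      have "0 \<le> real i * ln 2" using ln2(1) by simp
      thus "1 \<le> L0 + real i * ln 2" using L0 by linarith
      show "L0 + real i * ln 2 \<le> L0 + real i" using ln2 mult_left_mono[of "ln 2" 1 "real i"] by simp
    qed (use assms N in auto)
    finally show ?thesis .
  qed
  have "(\<Sum>i<m. tm (2*K) (\<delta> / real m) n i) \<le> (\<Sum>i<m. K\<^sup>2 / N\<^sup>2 * ((L0/2 + 5/8 + real i / 2) / 4^i))"
    by (rule sum_mono) (rule T)
  also have "\<dots> = K\<^sup>2 / N\<^sup>2 * (\<Sum>i<m. (L0/2 + 5/8 + real i / 2) / 4^i)"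
    by (simp add: sum_distrib_left)
  also have "\<dots> \<le> K\<^sup>2 / N\<^sup>2 * ((4/3)*(L0/2 + 5/8) + 2/9)"
    by (intro mult_left_mono geo_bound) (use L0 in simp_all)
  also have "\<dots> \<le> K\<^sup>2 / N\<^sup>2 * (4/3 * ln (6 * real n * real m / \<delta>))"
  proof (intro mult_left_mono)
    have "ln (2/3) \<le> 2/3 - (1::real)" by (rule ln_le_minus_one) simp
    moreover have "ln (2/3::real) = - ln (3/2)" by (simp add: ln_div)
    ultimately have l32: "1/3 \<le> ln (3/2::real)" by simp
    have e: "6 * real n * real m / \<delta> = 3/2 * x0" unfolding x0_def N_def M_def by simp
    have "ln (6 * real n * real m / \<delta>) = ln (3/2 * x0)" using e by (rule arg_cong)
    also have "\<dots> = ln (3/2) + ln x0" by (rule ln_mult_pos) (use x0p in auto)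
    finally have "ln (6 * real n * real m / \<delta>) = ln (3/2) + L0" unfolding L0_def .
    hence r: "4/3 * ln (6 * real n * real m / \<delta>) = 4/3 * ln (3/2) + 4/3 * L0" by (simp add: algebra_simps)
    have r2: "(4/3)*(L0/2 + 5/8) + 2/9 = 2/3 * L0 + 19/18" by (simp add: algebra_simps)
    show "(4/3)*(L0/2 + 5/8) + 2/9 \<le> 4/3 * ln (6 * real n * real m / \<delta>)" unfolding r r2 using l32 L0 by linarith
  qed simp
  also have "\<dots> = (2 / (real n * sqrt 3) * sqrt (ln (6 * real n * real m / \<delta>)) * K)\<^sup>2"
  proof -
    have "0 \<le> ln (6 * real n * real m / \<delta>)"
    proof -
      have "1 \<le> 6 * real n * real m / \<delta>" using x0 unfolding x0_def N_def M_def by (simp add: field_simps)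
      thus ?thesis by simp
    qed
    thus ?thesis by (simp add: power_mult_distrib power_divide N_def)
  qed
  finally show ?thesis .
qed


lemma inner_sum_list: "inner f (sum_list (map \<Phi> xs)) = sum_list (map (\<lambda>y. inner f (\<Phi> y)) xs)"
  by (induction xs) (simp_all add: inner_add_right)

lemma emp_avg_emb:
  fixes \<Phi> :: "'a \<Rightarrow> 'h::real_inner"
  shows "emp_avg xs (\<lambda>y. inner f (\<Phi> y)) = inner f (emb \<Phi> xs)"
  by (simp add: emp_avg_def emb_def inner_sum_list divide_inverse mult.commute)

lemma mmd_ge:
  fixes \<Phi> :: "'a \<Rightarrow> 'h::real_inner"
  shows "norm (\<Phi> x - emb \<Phi> xs) \<le> mmd \<Phi> [x] xs"
proof -
  define v where "v = \<Phi> x - emb \<Phi> xs"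
  define h where "h = (\<lambda>f::'h. \<bar>emp_avg [x] (\<lambda>x. inner f (\<Phi> x)) - emp_avg xs (\<lambda>x. inner f (\<Phi> x))\<bar>)"
  have val: "h f = \<bar>inner f v\<bar>" for f
  proof -
    have "emb \<Phi> [x] = \<Phi> x" by (simp add: emb_def)
    thus ?thesis unfolding h_def emp_avg_emb v_def by (simp add: inner_diff_right)
  qed
  have bdd: "bdd_above (h ` {f. norm f \<le> 1})"
  proof (rule bdd_aboveI2)
    fix f :: 'h assume "f \<in> {f. norm f \<le> 1}"
    hence "norm f * norm v \<le> 1 * norm v" by (intro mult_right_mono) auto
    thus "h f \<le> norm v" unfolding val using Cauchy_Schwarz_ineq2[of f v] by simp
  qed
  have f0: "sgn v \<in> {f. norm f \<le> 1}" by (simp add: norm_sgn)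
  have hv: "h (sgn v) = norm v"
  proof (cases "v = 0")
    case True thus ?thesis by (simp add: val)
  next
    case False
    have "inner (sgn v) v = inner v v / norm v" by (simp add: sgn_div_norm inner_scaleR_left divide_inverse)
    also have "\<dots> = norm v" using False by (simp add: power2_norm_eq_inner[symmetric] power2_eq_square)
    finally show ?thesis by (simp add: val)
  qed
  have "h (sgn v) \<le> (SUP f\<in>{f. norm f \<le> 1}. h f)" by (rule cSUP_upper[OF f0 bdd])
  hence "norm v \<le> (SUP f\<in>{f. norm f \<le> 1}. h f)" using hv by simp
  thus ?thesis unfolding mmd_def h_def[symmetric] v_def .
qed

theorem propositionB4:
  fixes \<Phi> :: "'a \<Rightarrow> 'h::real_inner" and \<delta> :: real and xs :: "'a list" and n_out m :: nat
  assumes "0 < \<delta>" "\<delta> < 1" "0 < n_out" "0 < m" "length xs = n_out * 2 ^ m"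
  shows "\<exists>E. measure_pmf.prob (rkh \<Phi> \<delta> m xs) E \<ge> 1 - \<delta> / 2 \<and>
    sub_gaussian_on (rkh \<Phi> \<delta> m xs) (\<lambda>\<omega>. emb \<Phi> xs - emb \<Phi> (fst \<omega>))
      (2 / (real n_out * sqrt 3)
        * sqrt (ln (6 * real n_out * log 2 (real (length xs) / real n_out) / \<delta>))
        * min (Max ((\<lambda>x. sqrt (fkernel \<Phi> x x)) ` set xs))
              (Max ((\<lambda>x. mmd \<Phi> [x] xs) ` set xs)))
      E"
proof -
  define \<delta>' where "\<delta>' = \<delta> / real m"
  have d'0: "0 < \<delta>'" using assms by (simp add: \<delta>'_def)
  have d'1: "\<delta>' \<le> 1"
  proof -
    have "\<delta> \<le> 1 * real m" using assms by simp
    thus ?thesis unfolding \<delta>'_def using assms by (simp add: divide_le_eq)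
  qed
  have ne: "xs \<noteq> []" using assms by auto
  define A1 where "A1 = Max ((\<lambda>x. sqrt (fkernel \<Phi> x x)) ` set xs)"
  define A2 where "A2 = Max ((\<lambda>x. mmd \<Phi> [x] xs) ` set xs)"
  define K where "K = min A1 A2"
  have nA1: "norm (\<Phi> x) \<le> A1" if "x \<in> set xs" for x
  proof -
    have "sqrt (fkernel \<Phi> x x) \<le> A1" unfolding A1_def using that by (intro Max_ge) auto
    thus ?thesis by (simp add: fkernel_def norm_eq_sqrt_inner)
  qed
  have nA2: "norm (\<Phi> x - emb \<Phi> xs) \<le> A2" if "x \<in> set xs" for x
  proof -
    have "mmd \<Phi> [x] xs \<le> A2" unfolding A2_def using that by (intro Max_ge) auto
    thus ?thesis using mmd_ge[of \<Phi> x xs] by linarith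
  qed
  have K0: "0 \<le> K"
  proof -
    have "hd xs \<in> set xs" using ne by simp
    thus ?thesis unfolding K_def using nA1 nA2 norm_ge_zero by (meson min.boundedI order_trans)
  qed
  have pairB: "\<forall>x\<in>set xs. \<forall>y\<in>set xs. norm (\<Phi> x - \<Phi> y) \<le> 2*K"
  proof (intro ballI)
    fix x y assume xy: "x \<in> set xs" "y \<in> set xs"
    have "norm (\<Phi> x - \<Phi> y) \<le> norm (\<Phi> x) + norm (\<Phi> y)" by (rule norm_triangle_ineq4)
    also have "\<dots> \<le> 2 * A1" using nA1[OF xy(1)] nA1[OF xy(2)] by simp
    finally have 1: "norm (\<Phi> x - \<Phi> y) \<le> 2 * A1" .
    have "norm (\<Phi> x - \<Phi> y) = norm ((\<Phi> x - emb \<Phi> xs) - (\<Phi> y - emb \<Phi> xs))" by simp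
    also have "\<dots> \<le> norm (\<Phi> x - emb \<Phi> xs) + norm (\<Phi> y - emb \<Phi> xs)" by (rule norm_triangle_ineq4)
    also have "\<dots> \<le> 2 * A2" using nA2[OF xy(1)] nA2[OF xy(2)] by simp
    finally have 2: "norm (\<Phi> x - \<Phi> y) \<le> 2 * A2" .
    show "norm (\<Phi> x - \<Phi> y) \<le> 2*K" unfolding K_def using 1 2 by simp
  qed
  define E where "E = {\<omega> :: 'a list \<times> bool list list. GoodR \<Phi> \<delta>' m xs (snd \<omega>)}"
  have rkh: "rkh \<Phi> \<delta> m xs = rkh_iter \<Phi> \<delta>' m xs" by (simp add: rkh_def \<delta>'_def)
  have logm: "log 2 (real (length xs) / real n_out) = real m"
    using assms(3,5) by simp
  define \<nu> where "\<nu> = 2 / (real n_out * sqrt 3) * sqrt (ln (6 * real n_out * real m / \<delta>)) * K"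
  show ?thesis
  proof (intro exI[of _ E] conjI)
    have "emeasure (rkh_iter \<Phi> \<delta>' m xs) (UNIV - E) = (\<integral>\<^sup>+\<omega>. indicator (UNIV - E) \<omega> \<partial>rkh_iter \<Phi> \<delta>' m xs)"
      by (rule nn_integral_indicator[symmetric]) simp
    also have "\<dots> = (\<integral>\<^sup>+\<omega>. (if GoodR \<Phi> \<delta>' m xs (snd \<omega>) then 0 else 1) \<partial>rkh_iter \<Phi> \<delta>' m xs)"
      by (intro nn_integral_cong) (simp add: E_def indicator_def)
    also have "\<dots> \<le> ennreal (real m * \<delta>' / 2)"
      by (rule rounds_B[OF assms(5) assms(3) d'0 d'1])
    also have "real m * \<delta>' / 2 = \<delta> / 2" using assms by (simp add: \<delta>'_def)
    finally have "ennreal (measure_pmf.prob (rkh_iter \<Phi> \<delta>' m xs) (UNIV - E)) \<le> ennreal (\<delta> / 2)"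
      by (simp add: measure_pmf.emeasure_eq_measure)
    hence "measure_pmf.prob (rkh_iter \<Phi> \<delta>' m xs) (UNIV - E) \<le> \<delta> / 2"
      using assms by (simp add: ennreal_le_iff)
    moreover have "measure_pmf.prob (rkh_iter \<Phi> \<delta>' m xs) (UNIV - E) = 1 - measure_pmf.prob (rkh_iter \<Phi> \<delta>' m xs) E"
      using measure_pmf.prob_compl[of E "rkh_iter \<Phi> \<delta>' m xs"] by simp
    ultimately show "measure_pmf.prob (rkh \<Phi> \<delta> m xs) E \<ge> 1 - \<delta> / 2" unfolding rkh by linarith
  next
    show "sub_gaussian_on (rkh \<Phi> \<delta> m xs) (\<lambda>\<omega>. emb \<Phi> xs - emb \<Phi> (fst \<omega>))
      (2 / (real n_out * sqrt 3)
        * sqrt (ln (6 * real n_out * log 2 (real (length xs) / real n_out) / \<delta>))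
        * min (Max ((\<lambda>x. sqrt (fkernel \<Phi> x x)) ` set xs))
              (Max ((\<lambda>x. mmd \<Phi> [x] xs) ` set xs)))
      E"
      unfolding logm A1_def[symmetric] A2_def[symmetric] K_def[symmetric] \<nu>_def[symmetric] sub_gaussian_on_def rkh
    proof
      fix f :: 'h
      define S where "S = (\<Sum>i<m. tm (2*K) \<delta>' n_out i)"
      have "measure_pmf.expectation (rkh_iter \<Phi> \<delta>' m xs) (\<lambda>\<omega>. exp (inner f (emb \<Phi> xs - emb \<Phi> (fst \<omega>))) * indicator E \<omega>)
          = enn2real (\<integral>\<^sup>+\<omega>. ennreal (exp (inner f (emb \<Phi> xs - emb \<Phi> (fst \<omega>))) * indicator E \<omega>) \<partial>rkh_iter \<Phi> \<delta>' m xs)"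
        by (rule integral_eq_nn_integral) auto
      also have "(\<integral>\<^sup>+\<omega>. ennreal (exp (inner f (emb \<Phi> xs - emb \<Phi> (fst \<omega>))) * indicator E \<omega>) \<partial>rkh_iter \<Phi> \<delta>' m xs)
          = (\<integral>\<^sup>+\<omega>. (if GoodR \<Phi> \<delta>' m xs (snd \<omega>) then ennreal (exp (inner f (emb \<Phi> xs - emb \<Phi> (fst \<omega>)))) else 0) \<partial>rkh_iter \<Phi> \<delta>' m xs)"
        by (intro nn_integral_cong) (simp add: E_def indicator_def)
      also have "enn2real \<dots> \<le> exp (S * (norm f)\<^sup>2/2)"
        unfolding S_def by (intro enn2real_leI rounds_J[OF assms(5) assms(3) d'0 d'1] pairB) (use K0 in simp_all)
      also have "\<dots> \<le> exp (\<nu>\<^sup>2 / 2 * (norm f)\<^sup>2)"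
      proof -
        have "S \<le> \<nu>\<^sup>2" unfolding S_def \<nu>_def \<delta>'_def by (rule numeric) (use assms K0 in auto)
        hence "S * (norm f)\<^sup>2 \<le> \<nu>\<^sup>2 * (norm f)\<^sup>2" by (simp add: mult_right_mono)
        thus ?thesis by simp
      qed
      finally show "measure_pmf.expectation (rkh_iter \<Phi> \<delta>' m xs) (\<lambda>\<omega>. exp (inner f (emb \<Phi> xs - emb \<Phi> (fst \<omega>))) * indicator E \<omega>)
          \<le> exp (\<nu>\<^sup>2 / 2 * (norm f)\<^sup>2)" .
    qed
  qed
qed

end
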